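(* Let $\mathscr{D}$ be a nonnegative integer-valued random variable with $\mathbb{P}(\mathscr{D}>t)=\mathcal{L}(t)t^{-\gamma}$, $\mathcal{L}$ slowly varying, $1<\gamma<2$, $\mu=\mathbb{E}[\mathscr D]$, and let $\kappa=(\gamma-1)/(1+\gamma)$. Let $D_1,\dots,D_n$ be i.i.d. copies, $L_n=\sum_iD_i$, $B_n(\varepsilon)=[\varepsilon\sqrt{\mu n},\sqrt{\mu n}/\varepsilon]$, \[ g_{n,\varepsilon}(x,y,z)=\big(1-e^{-xy/L_n}\big)\big(1-e^{-yz/L_n}\big)\big(1-e^{-zx/L_n}\big)\mathbf 1\{x,y,z\in B_n(\varepsilon)\}, \] \[ f_{n,\varepsilon}(x,y,z)=\big(1-e^{-xy/(\mu n)}\big)\big(1-e^{-yz/(\mu n)}\big)\big(1-e^{-zx/(\mu n)}\big)\mathbf 1\{x,y,z\in B_n(\varepsilon)\}. \] Then for all $\varepsilon>0$ and $\delta<\kappa$, \[ n^{\frac{3\gamma}2-3+\delta}\Big|\sum_{1\le i<j<k\le n}\big(g_{n,\varepsilon}(D_i,D_j,D_k)-f_{n,\varepsilon}(D_i,D_j,D_k)\big)\Big|\to0\text{ in probability}. \] *)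

theory Defs
  imports "HOL-Probability.Probability"
begin

definition slowly_varying :: "(real \<Rightarrow> real) \<Rightarrow> bool" where
  "slowly_varying L \<longleftrightarrow> L \<in> borel_measurable borel \<and>
     (\<forall>\<^sub>F t in at_top. L t > 0) \<and>
     (\<forall>a>0. ((\<lambda>t. L (a * t) / L t) \<longlongrightarrow> 1) at_top)"

definition conv_prob_zero :: "'a measure \<Rightarrow> (nat \<Rightarrow> 'a \<Rightarrow> real) \<Rightarrow> bool" where
  "conv_prob_zero M X \<longleftrightarrow>
     (\<forall>e>0. ((\<lambda>n. measure M {\<omega> \<in> space M. \<bar>X n \<omega>\<bar> > e}) \<longlonglongrightarrow> 0))"

definition Bwin :: "real \<Rightarrow> nat \<Rightarrow> real \<Rightarrow> real set" where
  "Bwin \<mu> n \<epsilon> = {\<epsilon> * sqrt (\<mu> * real n) .. sqrt (\<mu> * real n) / \<epsilon>}"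

text \<open>g and f with normalisation N (N = L_n for g, N = mu n for f).\<close>
definition tri_kernel :: "real \<Rightarrow> real \<Rightarrow> nat \<Rightarrow> real \<Rightarrow> real \<Rightarrow> real \<Rightarrow> real \<Rightarrow> real" where
  "tri_kernel N \<mu> n \<epsilon> x y z =
     (1 - exp (- (x * y) / N)) * (1 - exp (- (y * z) / N)) * (1 - exp (- (z * x) / N)) *
     (if x \<in> Bwin \<mu> n \<epsilon> \<and> y \<in> Bwin \<mu> n \<epsilon> \<and> z \<in> Bwin \<mu> n \<epsilon> then 1 else 0)"

end

theory Submission
  imports Defs
begin


lemma dyadic_exists:
  fixes x :: real assumes "1 \<le> x"
  shows "\<exists>j::nat. 2 ^ j \<le> x \<and> x < 2 ^ Suc j"
proof -
  obtain k :: nat where k: "x < 2 ^ k" using real_arch_pow[of 2 x] by auto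
  have "\<forall>x::real. 1 \<le> x \<longrightarrow> x < 2 ^ k \<longrightarrow> (\<exists>j::nat. 2 ^ j \<le> x \<and> x < 2 ^ Suc j)"
  proof (induction k)
    case 0 then show ?case by auto
  next
    case (Suc k)
    show ?case
    proof (intro allI impI)
      fix x :: real assume "1 \<le> x" "x < 2 ^ Suc k"
      show "\<exists>j::nat. 2 ^ j \<le> x \<and> x < 2 ^ Suc j"
      proof (cases "x < 2 ^ k")
        case True then show ?thesis using Suc.IH \<open>1 \<le> x\<close> by blast
      next
        case False then show ?thesis using \<open>x < 2 ^ Suc k\<close> by (intro exI[of _ k]) auto
      qed
    qed
  qed
  then show ?thesis using assms k by blast
qed

lemma tail_bound:
  fixes F L :: "real \<Rightarrow> real" and \<gamma> \<beta> :: real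
  assumes anti: "\<And>s t. 0 < s \<Longrightarrow> s \<le> t \<Longrightarrow> F t \<le> F s"
    and le1: "\<And>t. F t \<le> 1"
    and sv: "slowly_varying L"
    and FL: "\<forall>t>0. F t = L t * t powr (- \<gamma>)"
    and b: "0 < \<beta>" "\<beta> < \<gamma>"
  shows "\<exists>C>0. \<forall>t>0. F t \<le> C * t powr (- \<beta>)"
proof -
  define \<eta> where "\<eta> = \<gamma> - \<beta>"
  have eta: "\<eta> > 0" using b by (simp add: \<eta>_def)
  have r1: "(2::real) powr \<eta> > 1" using eta by simp
  from sv have lim: "((\<lambda>t. L (2 * t) / L t) \<longlongrightarrow> 1) at_top" and pos: "\<forall>\<^sub>F t in at_top. L t > 0"
    unfolding slowly_varying_def by auto
  have ev: "\<forall>\<^sub>F t in at_top. L (2 * t) / L t < 2 powr \<eta>"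
    using order_tendstoD(2)[OF lim r1] .
  obtain T where T: "\<And>t. t \<ge> T \<Longrightarrow> L t > 0 \<and> L (2 * t) / L t < 2 powr \<eta>"
    using eventually_conj[OF pos ev] unfolding eventually_at_top_linorder by blast
  define T' where "T' = max T 1"
  have T'1: "T' \<ge> 1" and T'T: "T' \<ge> T" by (auto simp: T'_def)
  have grow: "L (2 ^ k * T') \<le> (2 powr \<eta>) ^ k * L T'" for k :: nat
  proof (induction k)
    case 0 then show ?case by simp
  next
    case (Suc k)
    have ge: "2 ^ k * T' \<ge> T"
    proof -
      have "(1::real) \<le> 2 ^ k" by simp
      then have "T' \<le> 2 ^ k * T'" using T'1 by (simp add: mult_le_cancel_right1)
      then show ?thesis using T'T by linarith
    qed
    from T[OF ge] have "L (2 * (2 ^ k * T')) < 2 powr \<eta> * L (2 ^ k * T')"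
      by (simp add: divide_less_eq)
    also have "\<dots> \<le> 2 powr \<eta> * ((2 powr \<eta>) ^ k * L T')"
      using Suc.IH by (intro mult_left_mono) auto
    finally show ?case by (simp add: algebra_simps)
  qed
  have LT'pos: "L T' > 0" using T[OF T'T] by simp
  define C0 where "C0 = L T' * T' powr (- \<gamma>) * (2 * T') powr \<beta>"
  define C where "C = max C0 (T' powr \<beta>)"
  have Cpos: "C > 0" using T'1 by (simp add: C_def less_max_iff_disj)
  have big: "F t \<le> C0 * t powr (- \<beta>)" if t: "t \<ge> T'" for t
  proof -
    obtain k :: nat where k: "2 ^ k \<le> t / T'" "t / T' < 2 ^ Suc k"
      using dyadic_exists[of "t / T'"] t T'1 by auto
    have k1: "2 ^ k * T' \<le> t" using k(1) T'1 by (simp add: le_divide_eq)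
    have k2: "t < 2 * 2 ^ k * T'" using k(2) T'1 by (simp add: divide_less_eq)
    have pk: "(0::real) < 2 ^ k" by simp
    have "F t \<le> F (2 ^ k * T')" using anti[OF _ k1] T'1 by simp
    also have "\<dots> = L (2 ^ k * T') * (2 ^ k * T') powr (- \<gamma>)"
      using FL T'1 by simp
    also have "\<dots> \<le> (2 powr \<eta>) ^ k * L T' * (2 ^ k * T') powr (- \<gamma>)"
      using grow[of k] by (intro mult_right_mono) auto
    also have "\<dots> = L T' * T' powr (- \<gamma>) * (2 ^ k) powr (- \<beta>)"
    proof -
      have "(2 powr \<eta>) ^ k = ((2::real) ^ k) powr \<eta>"
        by (simp add: powr_realpow[symmetric] powr_powr mult.commute)
      moreover have "(2 ^ k * T') powr (- \<gamma>) = ((2::real) ^ k) powr (- \<gamma>) * T' powr (- \<gamma>)"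
        using T'1 by (simp add: powr_mult)
      moreover have "((2::real) ^ k) powr \<eta> * (2 ^ k) powr (- \<gamma>) = (2 ^ k) powr (- \<beta>)"
        by (simp add: powr_add[symmetric] \<eta>_def)
      ultimately show ?thesis by (simp add: algebra_simps)
    qed
    also have "(2 ^ k) powr (- \<beta>) \<le> (t / (2 * T')) powr (- \<beta>)"
    proof -
      have "t / (2 * T') \<le> 2 ^ k" using k2 T'1 by (simp add: divide_le_eq algebra_simps)
      moreover have "t / (2 * T') > 0" using t T'1 by simp
      ultimately show ?thesis using b by (intro powr_mono2') auto
    qed
    then have "L T' * T' powr (- \<gamma>) * (2 ^ k) powr (- \<beta>) \<le> L T' * T' powr (- \<gamma>) * (t / (2 * T')) powr (- \<beta>)"
      using LT'pos by (intro mult_left_mono) auto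
    also have "(t / (2 * T')) powr (- \<beta>) = (2 * T') powr \<beta> * t powr (- \<beta>)"
      using t T'1 by (simp add: powr_divide powr_minus divide_simps)
    finally show ?thesis by (simp add: C0_def algebra_simps)
  qed
  have "F t \<le> C * t powr (- \<beta>)" if t: "t > 0" for t
  proof (cases "t \<ge> T'")
    case True
    have "C0 * t powr (- \<beta>) \<le> C * t powr (- \<beta>)" by (intro mult_right_mono) (auto simp: C_def)
    then show ?thesis using big[OF True] by linarith
  next
    case False
    have "T' powr (- \<beta>) \<le> t powr (- \<beta>)" using False t b by (intro powr_mono2') auto
    then have "T' powr \<beta> * T' powr (- \<beta>) \<le> T' powr \<beta> * t powr (- \<beta>)"
      by (intro mult_left_mono) auto
    moreover have "T' powr \<beta> * T' powr (- \<beta>) = 1" using T'1 by (simp add: powr_add[symmetric])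
    ultimately have "1 \<le> T' powr \<beta> * t powr (- \<beta>)" by simp
    also have "\<dots> \<le> C * t powr (- \<beta>)" by (intro mult_right_mono) (auto simp: C_def)
    finally show ?thesis using le1[of t] by linarith
  qed
  then show ?thesis using Cpos by blast
qed



locale iid_setup = prob_space M for M :: "'a measure" +
  fixes D :: "nat \<Rightarrow> 'a \<Rightarrow> nat"
  assumes Dmeas[measurable]: "\<And>i. D i \<in> measurable M (count_space UNIV)"
    and Dind: "indep_vars (\<lambda>_. count_space UNIV) D UNIV"
    and Ddistr: "\<And>i. distr M (count_space UNIV) (D i) = distr M (count_space UNIV) (D 0)"
begin

lemma meas_h[measurable]: "(\<lambda>\<omega>. h (D i \<omega>) :: real) \<in> borel_measurable M"
  by (rule measurable_compose[OF Dmeas]) simp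

lemma sets_D[measurable]: "{\<omega> \<in> space M. P (D i \<omega>)} \<in> sets M"
proof -
  have "{\<omega> \<in> space M. P (D i \<omega>)} = D i -` {k. P k} \<inter> space M" by auto
  then show ?thesis using measurable_sets[OF Dmeas, of "{k. P k}"] by simp
qed

lemma ident_integrable: "integrable M (\<lambda>\<omega>. h (D i \<omega>) :: real) \<longleftrightarrow> integrable M (\<lambda>\<omega>. h (D 0 \<omega>))"
proof -
  have "integrable M (\<lambda>\<omega>. h (D i \<omega>)) \<longleftrightarrow> integrable (distr M (count_space UNIV) (D i)) h"
    by (subst integrable_distr_eq) auto
  also have "\<dots> \<longleftrightarrow> integrable (distr M (count_space UNIV) (D 0)) h" by (simp add: Ddistr[of i])
  also have "\<dots> \<longleftrightarrow> integrable M (\<lambda>\<omega>. h (D 0 \<omega>))"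
    by (subst integrable_distr_eq) auto
  finally show ?thesis .
qed

lemma ident_integral: "expectation (\<lambda>\<omega>. h (D i \<omega>) :: real) = expectation (\<lambda>\<omega>. h (D 0 \<omega>))"
proof -
  have "expectation (\<lambda>\<omega>. h (D i \<omega>)) = integral\<^sup>L (distr M (count_space UNIV) (D i)) h"
    by (subst integral_distr) auto
  also have "\<dots> = integral\<^sup>L (distr M (count_space UNIV) (D 0)) h" by (simp add: Ddistr[of i])
  also have "\<dots> = expectation (\<lambda>\<omega>. h (D 0 \<omega>))"
    by (subst integral_distr) auto
  finally show ?thesis .
qed

lemma ident_prob: "prob {\<omega> \<in> space M. P (D i \<omega>)} = prob {\<omega> \<in> space M. P (D 0 \<omega>)}"
proof -
  have "prob {\<omega> \<in> space M. P (D i \<omega>)} = measure (distr M (count_space UNIV) (D i)) {k. P k}"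
    by (subst measure_distr) (auto intro!: arg_cong[where f="measure M"])
  also have "\<dots> = measure (distr M (count_space UNIV) (D 0)) {k. P k}" by (simp add: Ddistr[of i])
  also have "\<dots> = prob {\<omega> \<in> space M. P (D 0 \<omega>)}"
    by (subst measure_distr) (auto intro!: arg_cong[where f="measure M"])
  finally show ?thesis .
qed

lemma indep_pair:
  fixes h :: "nat \<Rightarrow> real"
  assumes "i \<noteq> j" and int: "integrable M (\<lambda>\<omega>. h (D 0 \<omega>))"
  shows "expectation (\<lambda>\<omega>. h (D i \<omega>) * h (D j \<omega>)) =
         expectation (\<lambda>\<omega>. h (D i \<omega>)) * expectation (\<lambda>\<omega>. h (D j \<omega>))"
proof -
  have ind: "indep_vars (\<lambda>_. borel) (\<lambda>l \<omega>. h (D l \<omega>)) {i, j}"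
    by (rule indep_vars_subset[OF indep_vars_compose2[OF Dind]]) auto
  have intl: "integrable M (\<lambda>\<omega>. h (D l \<omega>))" for l using int ident_integrable by blast
  have "expectation (\<lambda>\<omega>. \<Prod>l\<in>{i,j}. h (D l \<omega>)) = (\<Prod>l\<in>{i,j}. expectation (\<lambda>\<omega>. h (D l \<omega>)))"
    by (rule indep_vars_lebesgue_integral[OF _ ind]) (auto intro: intl)
  then show ?thesis using assms(1) by simp
qed

end


context iid_setup begin

lemma bounded_integrable:
  fixes h :: "nat \<Rightarrow> real" assumes "\<And>k. \<bar>h k\<bar> \<le> B"
  shows "integrable M (\<lambda>\<omega>. h (D i \<omega>))"
  by (rule integrable_const_bound[where B=B]) (use assms in auto)

lemma second_moment:
  fixes h :: "nat \<Rightarrow> real" assumes bnd: "\<And>k. \<bar>h k\<bar> \<le> B"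
  shows "expectation (\<lambda>\<omega>. (\<Sum>i<n. h (D i \<omega>) - expectation (\<lambda>\<omega>. h (D 0 \<omega>)))\<^sup>2)
          \<le> real n * expectation (\<lambda>\<omega>. (h (D 0 \<omega>))\<^sup>2)"
proof -
  define c where "c = expectation (\<lambda>\<omega>. h (D 0 \<omega>))"
  define g where "g k = h k - c" for k
  have gb: "\<bar>g k\<bar> \<le> B + \<bar>c\<bar>" for k using bnd[of k] by (simp add: g_def)
  have B0: "0 \<le> B" using bnd[of 0] by linarith
  have int1: "integrable M (\<lambda>\<omega>. g (D i \<omega>))" for i by (rule bounded_integrable[OF gb])
  have int2: "integrable M (\<lambda>\<omega>. g (D i \<omega>) * g (D j \<omega>))" for i j
    by (rule integrable_const_bound[where B="(B + \<bar>c\<bar>) * (B + \<bar>c\<bar>)"])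
       (use B0 in \<open>auto simp: abs_mult intro!: AE_I2 mult_mono gb\<close>)
  have inth: "integrable M (\<lambda>\<omega>. h (D i \<omega>))" for i by (rule bounded_integrable[OF bnd])
  have inth2: "integrable M (\<lambda>\<omega>. (h (D i \<omega>))\<^sup>2)" for i
  proof (rule integrable_const_bound[where B="B * B"])
    have "\<bar>h k\<bar> * \<bar>h k\<bar> \<le> B * B" for k using bnd[of k] B0 by (intro mult_mono) auto
    then show "AE x in M. norm ((h (D i x))\<^sup>2) \<le> B * B"
      by (auto simp: power2_eq_square abs_mult)
  qed simp
  have Eg: "expectation (\<lambda>\<omega>. g (D i \<omega>)) = 0" for i
  proof -
    have "expectation (\<lambda>\<omega>. g (D i \<omega>)) = expectation (\<lambda>\<omega>. h (D i \<omega>)) - c"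
      unfolding g_def using inth[of i] by (simp add: prob_space)
    then show ?thesis using ident_integral[of h i] by (simp add: c_def)
  qed
  have off: "expectation (\<lambda>\<omega>. g (D i \<omega>) * g (D j \<omega>)) = 0" if "i \<noteq> j" for i j
    using indep_pair[OF that int1[of 0]] Eg by simp
  have diag: "expectation (\<lambda>\<omega>. g (D i \<omega>) * g (D i \<omega>)) \<le> expectation (\<lambda>\<omega>. (h (D 0 \<omega>))\<^sup>2)" for i
  proof -
    have "expectation (\<lambda>\<omega>. g (D i \<omega>) * g (D i \<omega>)) = variance (\<lambda>\<omega>. h (D i \<omega>))"
      using ident_integral[of h i] by (simp add: g_def c_def power2_eq_square)
    also have "\<dots> = expectation (\<lambda>\<omega>. (h (D i \<omega>))\<^sup>2) - (expectation (\<lambda>\<omega>. h (D i \<omega>)))\<^sup>2"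
      by (rule variance_eq[OF inth inth2])
    also have "\<dots> \<le> expectation (\<lambda>\<omega>. (h (D i \<omega>))\<^sup>2)" by simp
    also have "\<dots> = expectation (\<lambda>\<omega>. (h (D 0 \<omega>))\<^sup>2)"
      using ident_integral[of "\<lambda>k. (h k)\<^sup>2" i] by simp
    finally show ?thesis .
  qed
  have "expectation (\<lambda>\<omega>. (\<Sum>i<n. h (D i \<omega>) - c)\<^sup>2)
      = expectation (\<lambda>\<omega>. \<Sum>i<n. \<Sum>j<n. g (D i \<omega>) * g (D j \<omega>))"
    by (simp add: power2_eq_square sum_product g_def)
  also have "\<dots> = (\<Sum>i<n. \<Sum>j<n. expectation (\<lambda>\<omega>. g (D i \<omega>) * g (D j \<omega>)))"
    by (simp add: int2 Bochner_Integration.integral_sum Bochner_Integration.integrable_sum)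
  also have "\<dots> = (\<Sum>i<n. expectation (\<lambda>\<omega>. g (D i \<omega>) * g (D i \<omega>)))"
  proof (rule sum.cong[OF refl])
    fix i assume i: "i \<in> {..<n}"
    have "(\<Sum>j<n. expectation (\<lambda>\<omega>. g (D i \<omega>) * g (D j \<omega>))) =
          expectation (\<lambda>\<omega>. g (D i \<omega>) * g (D i \<omega>)) +
          (\<Sum>j\<in>{..<n} - {i}. expectation (\<lambda>\<omega>. g (D i \<omega>) * g (D j \<omega>)))"
      using i by (subst sum.remove[of _ i]) auto
    also have "(\<Sum>j\<in>{..<n} - {i}. expectation (\<lambda>\<omega>. g (D i \<omega>) * g (D j \<omega>))) = 0"
      by (rule sum.neutral) (auto intro!: off)
    finally show "(\<Sum>j<n. expectation (\<lambda>\<omega>. g (D i \<omega>) * g (D j \<omega>))) =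
          expectation (\<lambda>\<omega>. g (D i \<omega>) * g (D i \<omega>))" by simp
  qed
  also have "\<dots> \<le> (\<Sum>i<n. expectation (\<lambda>\<omega>. (h (D 0 \<omega>))\<^sup>2))"
    by (rule sum_mono) (rule diag)
  also have "\<dots> = real n * expectation (\<lambda>\<omega>. (h (D 0 \<omega>))\<^sup>2)" by simp
  finally show ?thesis by (simp add: c_def)
qed

end


lemma pow_powr_eq: "((2::real) powr x) ^ j = 2 powr (real j * x)"
  by (simp add: powr_realpow[symmetric] powr_powr mult.commute)

context iid_setup begin

lemma moment:
  fixes C \<beta> p :: real
  assumes tail: "\<And>t. t > 0 \<Longrightarrow> prob {\<omega>\<in>space M. real (D 0 \<omega>) > t} \<le> C * t powr (- \<beta>)"
    and p: "0 < p" "p < \<beta>"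
  shows "integrable M (\<lambda>\<omega>. real (D 0 \<omega>) powr p)"
proof -
  define c where "c j = (2::real) powr (real (Suc j) * p)" for j :: nat
  define A where "A j = {\<omega>\<in>space M. 2 ^ j \<le> real (D 0 \<omega>)}" for j :: nat
  define r where "r = (2::real) powr (p - \<beta>)"
  define K where "K = C * 2 powr (p + \<beta>)"
  have Ameas[measurable]: "A j \<in> sets M" for j unfolding A_def by measurable
  have C0: "C \<ge> 0"
  proof -
    have "0 \<le> prob {\<omega>\<in>space M. real (D 0 \<omega>) > 1}" by simp
    also have "\<dots> \<le> C * 1 powr (- \<beta>)" by (rule tail) simp
    finally show ?thesis by simp
  qed
  have pw: "ennreal (norm (real (D 0 \<omega>) powr p)) \<le> (\<Sum>j. ennreal (c j) * indicator (A j) \<omega>)"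
    if \<omega>: "\<omega> \<in> space M" for \<omega>
  proof (cases "D 0 \<omega> = 0")
    case True then show ?thesis by simp
  next
    case False
    then have x1: "1 \<le> real (D 0 \<omega>)" by simp
    obtain j where j: "2 ^ j \<le> real (D 0 \<omega>)" "real (D 0 \<omega>) < 2 ^ Suc j"
      using dyadic_exists[OF x1] by blast
    have "real (D 0 \<omega>) powr p \<le> (2 ^ Suc j) powr p"
      using j x1 p by (intro powr_mono2) auto
    also have "(2 ^ Suc j) powr p = c j"
    proof -
      have e: "(2::real) ^ Suc j = 2 powr real (Suc j)" by (rule powr_realpow[symmetric]) simp
      show ?thesis unfolding c_def e by (rule powr_powr)
    qed
    finally have le: "norm (real (D 0 \<omega>) powr p) \<le> c j" by simp
    have "ennreal (norm (real (D 0 \<omega>) powr p)) \<le> ennreal (c j) * indicator (A j) \<omega>"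
      using le j \<omega> by (simp add: A_def ennreal_leI)
    also have "\<dots> = (\<Sum>i\<in>{j}. ennreal (c i) * indicator (A i) \<omega>)" by (simp only: sum.insert_remove[OF finite.emptyI] empty_Diff sum.empty add.right_neutral)
    also have "\<dots> \<le> (\<Sum>i. ennreal (c i) * indicator (A i) \<omega>)"
      by (rule sum_le_suminf) auto
    finally show ?thesis .
  qed
  have trm: "ennreal (c j) * emeasure M (A j) \<le> ennreal (K * r ^ j)" for j
  proof -
    have "prob (A j) \<le> prob {\<omega>\<in>space M. real (D 0 \<omega>) > 2 ^ j / 2}"
    proof (rule finite_measure_mono)
      show "A j \<subseteq> {\<omega>\<in>space M. real (D 0 \<omega>) > 2 ^ j / 2}"
      proof
        fix \<omega> assume "\<omega> \<in> A j"
        then have "(2::real) ^ j \<le> real (D 0 \<omega>)" "\<omega> \<in> space M" unfolding A_def by auto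
        moreover have "(2::real) ^ j / 2 < 2 ^ j" by simp
        ultimately have "real (D 0 \<omega>) > 2 ^ j / 2" "\<omega> \<in> space M" by linarith+
        then show "\<omega> \<in> {\<omega>\<in>space M. real (D 0 \<omega>) > 2 ^ j / 2}" by blast
      qed
    qed simp
    also have "\<dots> \<le> C * (2 ^ j / 2) powr (- \<beta>)" by (rule tail) simp
    finally have pr: "prob (A j) \<le> C * (2 ^ j / 2) powr (- \<beta>)" .
    have "c j * (C * (2 ^ j / 2) powr (- \<beta>)) = K * r ^ j"
    proof -
      have "(2 ^ j / 2 :: real) powr (- \<beta>) = 2 powr (real j * (- \<beta>) + \<beta>)"
      proof -
        have "(2 ^ j / 2 :: real) = 2 powr (real j - 1)" by (simp add: powr_diff powr_realpow)
        then show ?thesis by (simp add: powr_powr algebra_simps)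
      qed
      then show ?thesis unfolding c_def K_def r_def pow_powr_eq
        by (simp add: powr_add[symmetric] algebra_simps)
    qed
    then have "c j * prob (A j) \<le> K * r ^ j"
      using pr by (metis c_def mult_left_mono powr_ge_zero)
    then show ?thesis
      by (simp add: emeasure_eq_measure ennreal_mult'[symmetric] c_def ennreal_leI)
  qed
  have r1: "r < 1" "0 < r"
  proof -
    have "(2::real) powr (p - \<beta>) < 2 powr 0" using p by (intro powr_less_mono) auto
    then show "r < 1" by (simp add: r_def)
  qed (simp add: r_def)
  have sumb: "summable (\<lambda>j. K * r ^ j)"
    using r1 by (intro summable_mult summable_geometric) auto
  have "(\<integral>\<^sup>+\<omega>. ennreal (norm (real (D 0 \<omega>) powr p)) \<partial>M)
      \<le> (\<integral>\<^sup>+\<omega>. (\<Sum>j. ennreal (c j) * indicator (A j) \<omega>) \<partial>M)"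
    by (rule nn_integral_mono) (rule pw)
  also have "\<dots> = (\<Sum>j. ennreal (c j) * emeasure M (A j))"
    by (subst nn_integral_suminf) (auto simp: nn_integral_cmult_indicator)
  also have "\<dots> \<le> (\<Sum>j. ennreal (K * r ^ j))"
    by (intro suminf_le trm) auto
  also have "\<dots> < \<infinity>"
  proof -
    have "(\<Sum>j. ennreal (K * r ^ j)) \<noteq> top"
      by (rule ennreal_suminf_neq_top[OF sumb]) (use r1 C0 in \<open>simp add: K_def\<close>)
    then show ?thesis by (simp only: less_top[symmetric] infinity_ennreal_def not_False_eq_True)
  qed
  finally show ?thesis by (subst integrable_iff_bounded) auto
qed

end


lemma exp_lip:
  fixes u v :: real assumes "0 \<le> u" "0 \<le> v"
  shows "\<bar>(1 - exp (- u)) - (1 - exp (- v))\<bar> \<le> \<bar>u - v\<bar>"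
proof -
  have key: "exp (- a) - exp (- b) \<le> b - a" if "0 \<le> a" "a \<le> b" for a b :: real
  proof -
    have "1 - (b - a) \<le> exp (- (b - a))" using exp_ge_add_one_self[of "a - b"] by (simp add: algebra_simps)
    then have "exp (- a) * (1 - exp (- (b - a))) \<le> exp (- a) * (b - a)"
      by (intro mult_left_mono) auto
    also have "\<dots> \<le> 1 * (b - a)" using that by (intro mult_right_mono) auto
    finally show ?thesis by (simp add: algebra_simps exp_add[symmetric])
  qed
  have "0 \<le> exp (- a) - exp (- b)" if "a \<le> b" for a b :: real using that by simp
  show ?thesis
  proof (cases "u \<le> v")
    case True then show ?thesis using key[of u v] assms \<open>\<And>a b. a \<le> b \<Longrightarrow> 0 \<le> exp (- a) - exp (- b)\<close>[of u v] by auto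
  next
    case False then show ?thesis using key[of v u] assms \<open>\<And>a b. a \<le> b \<Longrightarrow> 0 \<le> exp (- a) - exp (- b)\<close>[of v u] by auto
  qed
qed

lemma prod3_diff:
  fixes a1 a2 a3 b1 b2 b3 :: real
  assumes "0 \<le> a2" "a2 \<le> 1" "0 \<le> a3" "a3 \<le> 1" "0 \<le> b1" "b1 \<le> 1" "0 \<le> b2" "b2 \<le> 1"
  shows "\<bar>a1 * a2 * a3 - b1 * b2 * b3\<bar> \<le> \<bar>a1 - b1\<bar> + \<bar>a2 - b2\<bar> + \<bar>a3 - b3\<bar>"
proof -
  have eq: "a1 * a2 * a3 - b1 * b2 * b3 = (a1 - b1) * (a2 * a3) + b1 * (a2 - b2) * a3 + b1 * b2 * (a3 - b3)"
    by (simp add: algebra_simps)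
  have "\<bar>(a1 - b1) * (a2 * a3)\<bar> \<le> \<bar>a1 - b1\<bar>"
    using assms by (simp add: abs_mult mult_le_one mult_left_le)
  moreover have "\<bar>b1 * (a2 - b2) * a3\<bar> \<le> \<bar>a2 - b2\<bar>"
  proof -
    have "\<bar>b1 * (a2 - b2) * a3\<bar> = \<bar>a2 - b2\<bar> * (b1 * a3)" using assms by (simp add: abs_mult)
    also have "\<dots> \<le> \<bar>a2 - b2\<bar> * 1" using assms by (intro mult_left_mono mult_le_one) auto
    finally show ?thesis by simp
  qed
  moreover have "\<bar>b1 * b2 * (a3 - b3)\<bar> \<le> \<bar>a3 - b3\<bar>"
  proof -
    have "\<bar>b1 * b2 * (a3 - b3)\<bar> = \<bar>a3 - b3\<bar> * (b1 * b2)" using assms by (simp add: abs_mult)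
    also have "\<dots> \<le> \<bar>a3 - b3\<bar> * 1" using assms by (intro mult_left_mono mult_le_one) auto
    finally show ?thesis by simp
  qed
  ultimately show ?thesis unfolding eq by (smt (verit) abs_triangle_ineq)
qed

lemma ratio_bound:
  fixes w S N \<epsilon> :: real
  assumes "N > 0" "2 * S \<ge> N" "\<epsilon> > 0" "0 \<le> w" "w \<le> N / \<epsilon>\<^sup>2"
  shows "\<bar>w / S - w / N\<bar> \<le> 2 / \<epsilon>\<^sup>2 * (\<bar>S - N\<bar> / N)"
proof -
  have S: "S > 0" using assms by linarith
  have "w / S - w / N = w * (N - S) / (S * N)" using S assms by (simp add: field_simps)
  then have "\<bar>w / S - w / N\<bar> = w * \<bar>S - N\<bar> / (S * N)" using S assms by (simp add: abs_mult abs_minus_commute)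
  also have "\<dots> \<le> (N / \<epsilon>\<^sup>2) * \<bar>S - N\<bar> / (S * N)"
    using S assms by (intro divide_right_mono mult_right_mono) auto
  also have "\<dots> = \<bar>S - N\<bar> / (\<epsilon>\<^sup>2 * S)" using S assms by (simp add: field_simps)
  also have "\<dots> \<le> \<bar>S - N\<bar> / (\<epsilon>\<^sup>2 * (N / 2))"
    using S assms by (intro divide_left_mono mult_left_mono mult_pos_pos) auto
  also have "\<dots> = 2 / \<epsilon>\<^sup>2 * (\<bar>S - N\<bar> / N)" using assms by (simp add: field_simps)
  finally show ?thesis .
qed

lemma kernel_diff:
  fixes S \<mu> \<epsilon> x y z :: real and n :: nat
  defines "N \<equiv> \<mu> * real n"
  assumes N: "N > 0" "2 * S \<ge> N" and e: "\<epsilon> > 0"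
  shows "\<bar>tri_kernel S \<mu> n \<epsilon> x y z - tri_kernel (\<mu> * real n) \<mu> n \<epsilon> x y z\<bar>
         \<le> 6 / \<epsilon>\<^sup>2 * (\<bar>S - N\<bar> / N) *
           (if \<epsilon> * sqrt N \<le> x \<and> \<epsilon> * sqrt N \<le> y \<and> \<epsilon> * sqrt N \<le> z then 1 else 0)"
proof (cases "x \<in> Bwin \<mu> n \<epsilon> \<and> y \<in> Bwin \<mu> n \<epsilon> \<and> z \<in> Bwin \<mu> n \<epsilon>")
  case False
  have z1: "tri_kernel S \<mu> n \<epsilon> x y z = 0" "tri_kernel (\<mu> * real n) \<mu> n \<epsilon> x y z = 0"
    unfolding tri_kernel_def using False by auto
  have "0 \<le> 6 / \<epsilon>\<^sup>2 * (\<bar>S - N\<bar> / N) *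
           (if \<epsilon> * sqrt N \<le> x \<and> \<epsilon> * sqrt N \<le> y \<and> \<epsilon> * sqrt N \<le> z then 1 else 0)"
    using N by simp
  then show ?thesis unfolding z1 by simp
next
  case True
  have sN: "sqrt N \<ge> 0" "sqrt N * sqrt N = N" using N by auto
  have lo: "\<epsilon> * sqrt N \<le> x" "\<epsilon> * sqrt N \<le> y" "\<epsilon> * sqrt N \<le> z"
    and hi: "x \<le> sqrt N / \<epsilon>" "y \<le> sqrt N / \<epsilon>" "z \<le> sqrt N / \<epsilon>"
    using True by (auto simp: Bwin_def N_def)
  have nn: "0 \<le> x" "0 \<le> y" "0 \<le> z" using lo sN e by (smt (verit) mult_nonneg_nonneg)+
  have prodb: "a * b \<le> N / \<epsilon>\<^sup>2" if "0 \<le> a" "0 \<le> b" "a \<le> sqrt N / \<epsilon>" "b \<le> sqrt N / \<epsilon>" for a b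
  proof -
    have "a * b \<le> (sqrt N / \<epsilon>) * (sqrt N / \<epsilon>)" using that by (intro mult_mono) auto
    also have "\<dots> = N / \<epsilon>\<^sup>2" using sN by (simp add: power2_eq_square)
    finally show ?thesis .
  qed
  define F where "F T a b = 1 - exp (- (a * b) / T)" for T a b :: real
  have Fb: "0 \<le> F T a b" "F T a b \<le> 1" if "0 \<le> a" "0 \<le> b" "T \<ge> 0" for T a b
    using that by (auto simp: F_def)
  have Fd: "\<bar>F S a b - F N a b\<bar> \<le> 2 / \<epsilon>\<^sup>2 * (\<bar>S - N\<bar> / N)"
    if "0 \<le> a" "0 \<le> b" "a \<le> sqrt N / \<epsilon>" "b \<le> sqrt N / \<epsilon>" for a b
  proof -
    have S0: "S > 0" using N by linarith
    have "\<bar>F S a b - F N a b\<bar> \<le> \<bar>a * b / S - a * b / N\<bar>"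
      unfolding F_def using exp_lip[of "a * b / S" "a * b / N"] that S0 N by simp
    also have "\<dots> \<le> 2 / \<epsilon>\<^sup>2 * (\<bar>S - N\<bar> / N)"
      by (rule ratio_bound[OF N e]) (use that prodb in auto)
    finally show ?thesis .
  qed
  have S0: "S \<ge> 0" using N by linarith
  have "\<bar>tri_kernel S \<mu> n \<epsilon> x y z - tri_kernel (\<mu> * real n) \<mu> n \<epsilon> x y z\<bar>
      = \<bar>F S x y * F S y z * F S z x - F N x y * F N y z * F N z x\<bar>"
    using True by (simp add: tri_kernel_def F_def N_def)
  also have "\<dots> \<le> \<bar>F S x y - F N x y\<bar> + \<bar>F S y z - F N y z\<bar> + \<bar>F S z x - F N z x\<bar>"
    by (rule prod3_diff) (use Fb nn S0 N in auto)
  also have "\<dots> \<le> 2 / \<epsilon>\<^sup>2 * (\<bar>S - N\<bar> / N) + 2 / \<epsilon>\<^sup>2 * (\<bar>S - N\<bar> / N) + 2 / \<epsilon>\<^sup>2 * (\<bar>S - N\<bar> / N)"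
    by (intro add_mono Fd nn hi)
  also have "\<dots> = 3 * (2 / \<epsilon>\<^sup>2 * (\<bar>S - N\<bar> / N))" by simp
  also have "\<dots> = 6 / \<epsilon>\<^sup>2 * (\<bar>S - N\<bar> / N) *
           (if \<epsilon> * sqrt N \<le> x \<and> \<epsilon> * sqrt N \<le> y \<and> \<epsilon> * sqrt N \<le> z then 1 else 0)"
    using lo by simp
  finally show ?thesis .
qed



lemma triple_sum_bound:
  fixes X :: "nat \<Rightarrow> real" and \<mu> \<epsilon> :: real and n :: nat
  defines "N \<equiv> \<mu> * real n" and "S \<equiv> \<Sum>l<n. X l"
  assumes N: "N > 0" "2 * S \<ge> N" and e: "\<epsilon> > 0"
  shows "\<bar>\<Sum>(i, j, k) \<in> {(i, j, k). i < j \<and> j < k \<and> k < n}.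
            tri_kernel S \<mu> n \<epsilon> (X i) (X j) (X k) - tri_kernel (\<mu> * real n) \<mu> n \<epsilon> (X i) (X j) (X k)\<bar>
         \<le> 6 / \<epsilon>\<^sup>2 * (\<bar>S - N\<bar> / N) * real (card {i. i < n \<and> \<epsilon> * sqrt N \<le> X i}) ^ 3"
proof -
  define T where "T = {(i, j, k). i < j \<and> j < k \<and> k < (n::nat)}"
  define A where "A = {i. i < n \<and> \<epsilon> * sqrt N \<le> X i}"
  define c where "c = 6 / \<epsilon>\<^sup>2 * (\<bar>S - N\<bar> / N)"
  have c0: "c \<ge> 0" using N by (simp add: c_def)
  have finT: "finite T"
  proof (rule finite_subset)
    show "T \<subseteq> {..<n} \<times> {..<n} \<times> {..<n}" by (auto simp: T_def)
  qed auto
  have finA: "finite A" by (auto simp: A_def)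
  have "\<bar>\<Sum>(i, j, k) \<in> T. tri_kernel S \<mu> n \<epsilon> (X i) (X j) (X k) - tri_kernel (\<mu> * real n) \<mu> n \<epsilon> (X i) (X j) (X k)\<bar>
      \<le> (\<Sum>t \<in> T. \<bar>(case t of (i, j, k) \<Rightarrow> tri_kernel S \<mu> n \<epsilon> (X i) (X j) (X k) - tri_kernel (\<mu> * real n) \<mu> n \<epsilon> (X i) (X j) (X k))\<bar>)"
    by (rule sum_abs)
  also have "\<dots> \<le> (\<Sum>t \<in> T. c * of_bool (t \<in> A \<times> A \<times> A))"
  proof (rule sum_mono)
    fix t assume t: "t \<in> T"
    obtain i j k where ijk: "t = (i, j, k)" by (cases t) auto
    have lt: "i < n" "j < n" "k < n" using t ijk by (auto simp: T_def)
    have "\<bar>tri_kernel S \<mu> n \<epsilon> (X i) (X j) (X k) - tri_kernel (\<mu> * real n) \<mu> n \<epsilon> (X i) (X j) (X k)\<bar>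
        \<le> c * (if \<epsilon> * sqrt N \<le> X i \<and> \<epsilon> * sqrt N \<le> X j \<and> \<epsilon> * sqrt N \<le> X k then 1 else 0)"
      using kernel_diff[of \<mu> n S \<epsilon> "X i" "X j" "X k"] N e unfolding c_def N_def by simp
    also have "\<dots> = c * of_bool (t \<in> A \<times> A \<times> A)" using lt ijk by (simp add: A_def)
    finally show "\<bar>(case t of (i, j, k) \<Rightarrow> tri_kernel S \<mu> n \<epsilon> (X i) (X j) (X k) - tri_kernel (\<mu> * real n) \<mu> n \<epsilon> (X i) (X j) (X k))\<bar>
        \<le> c * of_bool (t \<in> A \<times> A \<times> A)" using ijk by simp
  qed
  also have "\<dots> = c * real (card {t \<in> T. t \<in> A \<times> A \<times> A})"
    by (simp add: sum_distrib_left[symmetric] sum_of_bool_eq finT Int_def)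
  also have "\<dots> \<le> c * real (card (A \<times> A \<times> A))"
  proof -
    have "card {t \<in> T. t \<in> A \<times> A \<times> A} \<le> card (A \<times> A \<times> A)"
      by (rule card_mono) (use finA in auto)
    then show ?thesis using c0 by (intro mult_left_mono) auto
  qed
  also have "\<dots> = c * real (card A) ^ 3"
    by (simp add: card_cartesian_product power3_eq_cube)
  finally show ?thesis unfolding c_def A_def T_def .
qed



context iid_setup begin

lemma markov:
  fixes u :: "'a \<Rightarrow> real"
  assumes "integrable M u" "\<And>\<omega>. \<omega> \<in> space M \<Longrightarrow> 0 \<le> u \<omega>" "c > 0"
  shows "prob {\<omega>\<in>space M. u \<omega> \<ge> c} \<le> expectation u / c"
  by (rule integral_Markov_inequality_measure[where A="space M"]) (use assms in auto)

lemma tail_moment: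
  assumes mp: "integrable M (\<lambda>\<omega>. real (D 0 \<omega>) powr p)" and p: "p > 0" and s: "s > 0"
  shows "prob {\<omega>\<in>space M. s \<le> real (D i \<omega>)} \<le> expectation (\<lambda>\<omega>. real (D 0 \<omega>) powr p) / s powr p"
proof -
  have "prob {\<omega>\<in>space M. s \<le> real (D i \<omega>)} = prob {\<omega>\<in>space M. s \<le> real (D 0 \<omega>)}"
    by (rule ident_prob)
  also have "\<dots> \<le> prob {\<omega>\<in>space M. s powr p \<le> real (D 0 \<omega>) powr p}"
    by (rule finite_measure_mono) (use s p in \<open>auto intro: powr_mono2\<close>)
  also have "\<dots> \<le> expectation (\<lambda>\<omega>. real (D 0 \<omega>) powr p) / s powr p"
    by (rule markov[OF mp]) (use s in auto)
  finally show ?thesis .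
qed

lemma K_bound:
  assumes mp: "integrable M (\<lambda>\<omega>. real (D 0 \<omega>) powr p)" and p: "p > 0" and s: "s > 0" and c: "c > 0"
  shows "prob {\<omega>\<in>space M. real (card {i. i < n \<and> s \<le> real (D i \<omega>)}) > c}
         \<le> real n * (expectation (\<lambda>\<omega>. real (D 0 \<omega>) powr p) / s powr p) / c"
proof -
  define K where "K \<omega> = (\<Sum>i<n. indicator {\<omega>\<in>space M. s \<le> real (D i \<omega>)} \<omega> :: real)" for \<omega>
  have Keq: "real (card {i. i < n \<and> s \<le> real (D i \<omega>)}) = K \<omega>" if "\<omega> \<in> space M" for \<omega>
  proof -
    have "real (card {i. i < n \<and> s \<le> real (D i \<omega>)}) = real (card {i \<in> {..<n}. s \<le> real (D i \<omega>)})"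
      by (rule arg_cong[where f="\<lambda>A. real (card A)"]) auto
    also have "\<dots> = (\<Sum>i<n. of_bool (s \<le> real (D i \<omega>)))" by (simp add: sum_of_bool_eq Int_def)
    also have "\<dots> = K \<omega>" unfolding K_def using that by (intro sum.cong) (auto simp: indicator_def)
    finally show ?thesis .
  qed
  have ii: "integrable M (indicat_real {\<omega>\<in>space M. s \<le> real (D i \<omega>)})" for i
    by (rule integrable_real_indicator) (auto simp: emeasure_eq_measure)
  have intK: "integrable M K" unfolding K_def by (intro Bochner_Integration.integrable_sum ii)
  have EK: "expectation K = (\<Sum>i<n. prob {\<omega>\<in>space M. s \<le> real (D i \<omega>)})"
    unfolding K_def by (subst Bochner_Integration.integral_sum) (auto intro: ii)
  have "prob {\<omega>\<in>space M. real (card {i. i < n \<and> s \<le> real (D i \<omega>)}) > c} \<le> prob {\<omega>\<in>space M. K \<omega> \<ge> c}"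
    by (rule finite_measure_mono) (use Keq in \<open>auto simp: K_def\<close>)
  also have "\<dots> \<le> expectation K / c"
    by (rule markov[OF intK]) (use c in \<open>auto simp: K_def intro: sum_nonneg\<close>)
  also have "expectation K \<le> (\<Sum>i<n. expectation (\<lambda>\<omega>. real (D 0 \<omega>) powr p) / s powr p)"
    unfolding EK by (intro sum_mono tail_moment[OF mp p s])
  finally show ?thesis using c by (simp add: divide_right_mono)
qed

end


context iid_setup begin

lemma S_dev:
  fixes p b x \<mu> :: real and n :: nat
  assumes mp: "integrable M (\<lambda>\<omega>. real (D 0 \<omega>) powr p)" and p: "1 < p" and b: "b > 0" and x: "x > 0"
    and muE: "\<mu> = expectation (\<lambda>\<omega>. real (D 0 \<omega>))"
    and bias: "real n * (expectation (\<lambda>\<omega>. real (D 0 \<omega>) powr p) * b powr (1 - p)) \<le> x"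
  shows "prob {\<omega>\<in>space M. \<bar>(\<Sum>l<n. real (D l \<omega>)) - \<mu> * real n\<bar> > 3 * x}
         \<le> real n * (expectation (\<lambda>\<omega>. real (D 0 \<omega>) powr p) * b powr (1 - p)) / x + real n * (b * \<mu>) / x\<^sup>2"
proof -
  define m where "m = expectation (\<lambda>\<omega>. real (D 0 \<omega>) powr p)"
  define hb where "hb k = (if real k \<le> b then real k else 0)" for k :: nat
  define tl where "tl k = (if real k \<le> b then 0 else real k)" for k :: nat
  define c where "c = expectation (\<lambda>\<omega>. hb (D 0 \<omega>))"
  define et where "et = expectation (\<lambda>\<omega>. tl (D 0 \<omega>))"
  have split: "real k = hb k + tl k" for k by (simp add: hb_def tl_def)
  have kp: "real k \<le> real k powr p" for k :: nat
  proof (cases "k = 0")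
    case False
    then have "real k powr 1 \<le> real k powr p" using p by (intro powr_mono) auto
    then show ?thesis using False by simp
  qed simp
  have intX0: "integrable M (\<lambda>\<omega>. real (D 0 \<omega>))"
    by (rule Bochner_Integration.integrable_bound[OF mp]) (auto intro!: AE_I2 kp)
  have hbb: "\<bar>hb k\<bar> \<le> b" for k using b by (simp add: hb_def)
  have inthb: "integrable M (\<lambda>\<omega>. hb (D i \<omega>))" for i by (rule bounded_integrable[OF hbb])
  have inttl0: "integrable M (\<lambda>\<omega>. tl (D 0 \<omega>))"
    by (rule Bochner_Integration.integrable_bound[OF intX0]) (auto intro!: AE_I2 simp: tl_def)
  have inttl: "integrable M (\<lambda>\<omega>. tl (D i \<omega>))" for i using inttl0 ident_integrable by blast
  have tlp: "tl k \<le> real k powr p * b powr (1 - p)" for k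
  proof (cases "real k \<le> b")
    case True then show ?thesis by (simp add: tl_def)
  next
    case False
    then have k: "real k > b" by simp
    have "b powr (p - 1) \<le> real k powr (p - 1)" using k b p by (intro powr_mono2) auto
    then have "real k * (b powr (p - 1) * b powr (1 - p)) \<le> real k * (real k powr (p - 1) * b powr (1 - p))"
      using k b by (intro mult_left_mono mult_right_mono) auto
    moreover have e1: "b powr (p - 1) * b powr (1 - p) = 1" using b by (simp add: powr_add[symmetric])
    ultimately have "real k \<le> (real k * real k powr (p - 1)) * b powr (1 - p)"
      by (simp add: mult.assoc)
    moreover have "real k * real k powr (p - 1) = real k powr p"
      using k b by (simp add: powr_add[symmetric] powr_mult_base)
    ultimately show ?thesis using False by (simp add: tl_def)
  qed
  have et_le: "et \<le> m * b powr (1 - p)"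
  proof -
    have "et \<le> expectation (\<lambda>\<omega>. real (D 0 \<omega>) powr p * b powr (1 - p))"
      unfolding et_def by (rule integral_mono[OF inttl0]) (use mp tlp in auto)
    also have "\<dots> = m * b powr (1 - p)" by (simp add: m_def)
    finally show ?thesis .
  qed
  have et0: "et \<ge> 0" unfolding et_def by (rule integral_nonneg_AE) (auto simp: tl_def)
  have mu_split: "\<mu> = c + et"
  proof -
    have "\<mu> = expectation (\<lambda>\<omega>. hb (D 0 \<omega>) + tl (D 0 \<omega>))" unfolding muE by (simp add: split[symmetric])
    also have "\<dots> = c + et" unfolding c_def et_def by (rule Bochner_Integration.integral_add[OF inthb inttl0])
    finally show ?thesis .
  qed
  define f where "f \<omega> = (\<Sum>i<n. hb (D i \<omega>) - c)" for \<omega>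
  define g where "g \<omega> = (\<Sum>i<n. tl (D i \<omega>))" for \<omega>
  have decomp: "(\<Sum>l<n. real (D l \<omega>)) - \<mu> * real n = f \<omega> + g \<omega> - real n * et" for \<omega>
    unfolding f_def g_def mu_split by (simp add: split sum.distrib sum_subtractf algebra_simps)
  have g0: "g \<omega> \<ge> 0" for \<omega> unfolding g_def by (intro sum_nonneg) (auto simp: tl_def)
  have sub: "{\<omega>\<in>space M. \<bar>(\<Sum>l<n. real (D l \<omega>)) - \<mu> * real n\<bar> > 3 * x}
      \<subseteq> {\<omega>\<in>space M. \<bar>f \<omega>\<bar> \<ge> x} \<union> {\<omega>\<in>space M. g \<omega> \<ge> x}"
  proof
    fix \<omega> assume \<omega>: "\<omega> \<in> {\<omega>\<in>space M. \<bar>(\<Sum>l<n. real (D l \<omega>)) - \<mu> * real n\<bar> > 3 * x}"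
    have "real n * et \<le> x" using bias et_le et0
      by (smt (verit, best) m_def mult_left_mono of_nat_0_le_iff)
    moreover have "real n * et \<ge> 0" using et0 by simp
    ultimately show "\<omega> \<in> {\<omega>\<in>space M. \<bar>f \<omega>\<bar> \<ge> x} \<union> {\<omega>\<in>space M. g \<omega> \<ge> x}"
      using \<omega> decomp[of \<omega>] g0[of \<omega>] by auto
  qed
  have fmeas[measurable]: "f \<in> borel_measurable M" unfolding f_def by measurable
  have gmeas[measurable]: "g \<in> borel_measurable M" unfolding g_def by measurable
  have P1: "prob {\<omega>\<in>space M. g \<omega> \<ge> x} \<le> real n * (m * b powr (1 - p)) / x"
  proof -
    have intg: "integrable M g" unfolding g_def by (intro Bochner_Integration.integrable_sum inttl)
    have Eg: "expectation g = real n * et"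
      unfolding g_def et_def
    proof -
      have "expectation (\<lambda>\<omega>. \<Sum>i<n. tl (D i \<omega>)) = (\<Sum>i<n. expectation (\<lambda>\<omega>. tl (D i \<omega>)))"
        by (rule Bochner_Integration.integral_sum) (rule inttl)
      also have "\<dots> = (\<Sum>i<n. expectation (\<lambda>\<omega>. tl (D 0 \<omega>)))"
        by (rule sum.cong[OF refl]) (rule ident_integral)
      finally show "expectation (\<lambda>\<omega>. \<Sum>i<n. tl (D i \<omega>)) = real n * expectation (\<lambda>\<omega>. tl (D 0 \<omega>))"
        by simp
    qed
    have "prob {\<omega>\<in>space M. g \<omega> \<ge> x} \<le> expectation g / x" by (rule markov[OF intg g0 x])
    also have "\<dots> \<le> real n * (m * b powr (1 - p)) / x"
      unfolding Eg using et_le x by (intro divide_right_mono mult_left_mono) auto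
    finally show ?thesis .
  qed
  have P2: "prob {\<omega>\<in>space M. \<bar>f \<omega>\<bar> \<ge> x} \<le> real n * (b * \<mu>) / x\<^sup>2"
  proof -
    have fb: "\<bar>f \<omega>\<bar> \<le> real n * (b + \<bar>c\<bar>)" for \<omega>
    proof -
      have "\<bar>f \<omega>\<bar> \<le> (\<Sum>i<n. \<bar>hb (D i \<omega>) - c\<bar>)" unfolding f_def by (rule sum_abs)
      also have "\<dots> \<le> (\<Sum>i<n. b + \<bar>c\<bar>)" by (intro sum_mono order.trans[OF abs_triangle_ineq4] add_right_mono hbb)
      finally show ?thesis by simp
    qed
    have intf2: "integrable M (\<lambda>\<omega>. (f \<omega>)\<^sup>2)"
    proof (rule integrable_const_bound[where B="(real n * (b + \<bar>c\<bar>))\<^sup>2"])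
      show "AE \<omega> in M. norm ((f \<omega>)\<^sup>2) \<le> (real n * (b + \<bar>c\<bar>))\<^sup>2"
      proof (rule AE_I2)
        fix \<omega>
        have "\<bar>f \<omega>\<bar> \<le> \<bar>real n * (b + \<bar>c\<bar>)\<bar>" using fb[of \<omega>] by linarith
        then show "norm ((f \<omega>)\<^sup>2) \<le> (real n * (b + \<bar>c\<bar>))\<^sup>2"
          by (simp add: abs_le_square_iff)
      qed
    qed simp
    have "prob {\<omega>\<in>space M. \<bar>f \<omega>\<bar> \<ge> x} \<le> expectation (\<lambda>\<omega>. (f \<omega>)\<^sup>2) / x\<^sup>2"
      by (rule second_moment_method[OF fmeas intf2 x])
    also have "expectation (\<lambda>\<omega>. (f \<omega>)\<^sup>2) \<le> real n * expectation (\<lambda>\<omega>. (hb (D 0 \<omega>))\<^sup>2)"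
      unfolding f_def c_def by (rule second_moment[OF hbb])
    also have "expectation (\<lambda>\<omega>. (hb (D 0 \<omega>))\<^sup>2) \<le> b * \<mu>"
    proof -
      have hb2: "(hb k)\<^sup>2 \<le> b * real k" for k
        using b by (auto simp: hb_def power2_eq_square intro: mult_right_mono)
      have int2: "integrable M (\<lambda>\<omega>. (hb (D 0 \<omega>))\<^sup>2)"
        by (rule integrable_const_bound[where B="b\<^sup>2"])
           (use hbb b in \<open>auto intro!: AE_I2 simp: abs_le_square_iff[symmetric]\<close>)
      have "expectation (\<lambda>\<omega>. (hb (D 0 \<omega>))\<^sup>2) \<le> expectation (\<lambda>\<omega>. b * real (D 0 \<omega>))"
        by (rule integral_mono[OF int2]) (use intX0 hb2 in auto)
      also have "\<dots> = b * \<mu>" by (simp add: muE)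
      finally show ?thesis .
    qed
    finally show ?thesis using x by (simp add: divide_right_mono mult_left_mono)
  qed
  have "prob {\<omega>\<in>space M. \<bar>(\<Sum>l<n. real (D l \<omega>)) - \<mu> * real n\<bar> > 3 * x}
      \<le> prob ({\<omega>\<in>space M. \<bar>f \<omega>\<bar> \<ge> x} \<union> {\<omega>\<in>space M. g \<omega> \<ge> x})"
    by (rule finite_measure_mono[OF sub]) measurable
  also have "\<dots> \<le> prob {\<omega>\<in>space M. \<bar>f \<omega>\<bar> \<ge> x} + prob {\<omega>\<in>space M. g \<omega> \<ge> x}"
    by (rule measure_Un_le) measurable
  finally show ?thesis using P1 P2 unfolding m_def by linarith
qed

end


lemma params:
  fixes \<gamma> \<delta> :: real
  assumes g: "1 < \<gamma>" "\<gamma> < 2" and d: "0 < \<delta>" "\<delta> < (\<gamma> - 1) / (1 + \<gamma>)"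
  shows "\<exists>p \<theta> \<theta>' \<alpha>. 1 < p \<and> p < \<gamma> \<and> 3 * (\<gamma> - p) / 2 + \<delta> < \<theta>' \<and> \<theta>' < \<theta> \<and> 0 < \<theta>
     \<and> \<theta> < \<alpha> * (p - 1) \<and> \<alpha> < 1 - 2 * \<theta> \<and> 0 < \<alpha>"
proof -
  define \<kappa> where "\<kappa> = (\<gamma> - 1) / (1 + \<gamma>)"
  define t where "t = min ((\<gamma> - 1) / 2) ((\<kappa> - \<delta>) / 5)"
  define p where "p = \<gamma> - t"
  define A where "A = 3 * t / 2 + \<delta>"
  define B where "B = (\<gamma> - 1) / (2 * \<gamma> - 1) - t"
  define \<theta>' where "\<theta>' = A + (B - A) / 3"
  define \<theta> where "\<theta> = A + 2 * (B - A) / 3"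
  define r where "r = \<theta> / (p - 1)"
  define \<alpha> where "\<alpha> = r / 2 + 1 / 2 - \<theta>"
  have kd: "\<kappa> - \<delta> > 0" using d by (simp add: \<kappa>_def)
  have t0: "t > 0" using g kd by (simp add: t_def)
  have t1: "t \<le> (\<gamma> - 1) / 2" "t \<le> (\<kappa> - \<delta>) / 5" unfolding t_def by (rule min.cobounded1, rule min.cobounded2)
  have t2: "2 * t \<le> \<gamma> - 1" "5 * t \<le> \<kappa> - \<delta>" using t1 by (simp_all add: field_simps)
  have pgt: "p > 1" using t2 g unfolding p_def by linarith
  have kless: "\<kappa> < (\<gamma> - 1) / (2 * \<gamma> - 1)"
  proof -
    have "(\<gamma> - 1) * (2 * \<gamma> - 1) < (\<gamma> - 1) * (1 + \<gamma>)" using g by (intro mult_strict_left_mono) auto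
    then show ?thesis using g unfolding \<kappa>_def by (simp add: divide_simps)
  qed
  define Q where "Q = (\<gamma> - 1) / (2 * \<gamma> - 1)"
  have AB: "A < B" unfolding A_def B_def Q_def[symmetric] using t2 kless kd unfolding Q_def[symmetric] by linarith
  have A0: "A > 0" using t0 d by (simp add: A_def)
  have pB: "B \<le> (p - 1) / (2 * p - 1)"
  proof -
    have den: "2 * \<gamma> - 1 \<ge> 1" "2 * p - 1 > 0" using g pgt by auto
    have "(p - 1) / (2 * \<gamma> - 1) \<le> (p - 1) / (2 * p - 1)"
      using den pgt t0 by (intro divide_left_mono) (auto simp: p_def)
    moreover have "(p - 1) / (2 * \<gamma> - 1) = (\<gamma> - 1) / (2 * \<gamma> - 1) - t / (2 * \<gamma> - 1)"
      by (simp add: p_def diff_divide_distrib)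
    moreover have "t / (2 * \<gamma> - 1) \<le> t" using den t0 by (simp add: divide_le_eq)
    ultimately show ?thesis unfolding B_def by linarith
  qed
  have thB: "\<theta> < B" using AB unfolding \<theta>_def by (simp add: field_simps)
  have th: "\<theta> < (p - 1) / (2 * p - 1)" using thB pB by linarith
  then have th2: "\<theta> * (2 * p - 1) < p - 1" using pgt by (simp add: less_divide_eq)
  have "\<theta> < (1 - 2 * \<theta>) * (p - 1)" using th2 by (simp add: algebra_simps)
  then have th3: "\<theta> / (p - 1) < 1 - 2 * \<theta>"
    using pgt by (simp add: divide_less_eq)
  have th0: "\<theta> > 0" using A0 AB by (simp add: \<theta>_def field_simps)
  show ?thesis
  proof (intro exI conjI)
    show "1 < p" by (rule pgt)
    show "p < \<gamma>" using t0 by (simp add: p_def)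
    show "3 * (\<gamma> - p) / 2 + \<delta> < \<theta>'" using AB by (simp add: \<theta>'_def A_def p_def field_simps)
    show "\<theta>' < \<theta>" using AB by (simp add: \<theta>'_def \<theta>_def field_simps)
    show "0 < \<theta>" by (rule th0)
    have "\<theta> / (p - 1) < \<alpha>" using th3 unfolding \<alpha>_def r_def[symmetric] by linarith
    then show "\<theta> < \<alpha> * (p - 1)" using pgt by (simp add: divide_less_eq)
    show "\<alpha> < 1 - 2 * \<theta>" using th3 unfolding \<alpha>_def r_def[symmetric] by linarith
    show "0 < \<alpha>" proof -
      have "r > 0" unfolding r_def using th0 pgt by simp
      then show ?thesis using th3 unfolding \<alpha>_def r_def[symmetric] by linarith
    qed
  qed
qed



lemma lim_powr0:
  fixes c K :: real assumes "c < 0"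
  shows "((\<lambda>n::nat. K * real n powr c) \<longlongrightarrow> 0) sequentially"
  by (rule tendsto_mult_right_zero, rule tendsto_neg_powr[OF assms filterlim_real_sequentially])

lemma eq_a2:
  fixes n :: nat and m \<mu> \<alpha> p \<theta> :: real
  assumes "n > 0" "\<mu> > 0"
  shows "real n * (m * (real n powr \<alpha>) powr (1 - p)) / (\<mu> * real n powr (1 - \<theta>) / 3)
         = (3 * m / \<mu>) * real n powr (\<theta> - \<alpha> * (p - 1))"
proof -
  have n: "real n > 0" using assms by simp
  have "real n * (real n powr \<alpha>) powr (1 - p) / real n powr (1 - \<theta>) = real n powr (\<theta> - \<alpha> * (p - 1))"
  proof -
    have "real n * (real n powr \<alpha>) powr (1 - p) = real n powr (1 + \<alpha> * (1 - p))"
      using n by (simp add: powr_powr powr_add)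
    also have "\<dots> / real n powr (1 - \<theta>) = real n powr (1 + \<alpha> * (1 - p) - (1 - \<theta>))"
      by (rule powr_diff[symmetric])
    finally show ?thesis by (simp add: algebra_simps)
  qed
  then show ?thesis using n assms by (simp add: field_simps)
qed

lemma eq_a3:
  fixes n :: nat and \<mu> \<alpha> \<theta> :: real
  assumes "n > 0" "\<mu> > 0"
  shows "real n * (real n powr \<alpha> * \<mu>) / (\<mu> * real n powr (1 - \<theta>) / 3)\<^sup>2
         = (9 / \<mu>) * real n powr (\<alpha> - 1 + 2 * \<theta>)"
proof -
  have n: "real n > 0" using assms by simp
  have "real n * real n powr \<alpha> / (real n powr (1 - \<theta>))\<^sup>2 = real n powr (\<alpha> - 1 + 2 * \<theta>)"
  proof -
    have "real n * real n powr \<alpha> = real n powr (1 + \<alpha>)" using n by (simp add: powr_add)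
    moreover have "(real n powr (1 - \<theta>))\<^sup>2 = real n powr (2 - 2 * \<theta>)"
      using n by (simp add: powr_realpow[symmetric] powr_powr algebra_simps)
    ultimately show ?thesis using n by (simp add: powr_diff[symmetric] algebra_simps)
  qed
  then show ?thesis using n assms by (simp add: field_simps power2_eq_square)
qed

lemma eq_a1:
  fixes n :: nat and m \<mu> \<epsilon> p q :: real
  assumes "n > 0" "\<mu> > 0" "\<epsilon> > 0"
  shows "real n * (m / (\<epsilon> * sqrt (\<mu> * real n)) powr p) / real n powr q
         = (m / (\<epsilon> powr p * \<mu> powr (p / 2))) * real n powr (1 - p / 2 - q)"
proof -
  have n: "real n > 0" using assms by simp
  have s: "(\<epsilon> * sqrt (\<mu> * real n)) powr p = \<epsilon> powr p * \<mu> powr (p / 2) * real n powr (p / 2)"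
  proof -
    have "sqrt (\<mu> * real n) = (\<mu> * real n) powr (1/2)" using n assms by (simp add: powr_half_sqrt)
    then show ?thesis using n assms by (simp add: powr_mult powr_powr)
  qed
  have "real n / real n powr (p / 2) / real n powr q = real n powr (1 - p / 2 - q)"
    using n by (simp add: powr_diff)
  then show ?thesis unfolding s using n assms by (simp add: field_simps)
qed



context iid_setup begin

lemma main_pos:
  fixes \<gamma> \<mu> \<epsilon> \<delta> :: real
  assumes g: "1 < \<gamma>" "\<gamma> < 2"
    and tailL: "\<exists>L. slowly_varying L \<and>
           (\<forall>t>0. measure M {\<omega> \<in> space M. real (D 0 \<omega>) > t} = L t * t powr (- \<gamma>))"
    and muE: "\<mu> = expectation (\<lambda>\<omega>. real (D 0 \<omega>))"
    and e: "\<epsilon> > 0" and d: "0 < \<delta>" "\<delta> < (\<gamma> - 1) / (1 + \<gamma>)"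
  shows "conv_prob_zero M (\<lambda>n \<omega>.
           real n powr (3 * \<gamma> / 2 - 3 + \<delta>) *
           \<bar>\<Sum>(i, j, k) \<in> {(i, j, k). i < j \<and> j < k \<and> k < n}.
              tri_kernel (\<Sum>l<n. real (D l \<omega>)) \<mu> n \<epsilon>
                  (real (D i \<omega>)) (real (D j \<omega>)) (real (D k \<omega>))
            - tri_kernel (\<mu> * real n) \<mu> n \<epsilon>
                  (real (D i \<omega>)) (real (D j \<omega>)) (real (D k \<omega>))\<bar>)"
proof -
  obtain p \<theta> \<theta>' \<alpha> where pp: "1 < p" "p < \<gamma>" "3 * (\<gamma> - p) / 2 + \<delta> < \<theta>'" "\<theta>' < \<theta>" "0 < \<theta>"
      "\<theta> < \<alpha> * (p - 1)" "\<alpha> < 1 - 2 * \<theta>" "0 < \<alpha>"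
    using params[OF g d] by blast
  obtain L where L: "slowly_varying L"
    "\<forall>t>0. prob {\<omega> \<in> space M. real (D 0 \<omega>) > t} = L t * t powr (- \<gamma>)"
    using tailL by blast
  define F where "F t = prob {\<omega> \<in> space M. real (D 0 \<omega>) > t}" for t
  define \<beta> where "\<beta> = (p + \<gamma>) / 2"
  have b: "0 < \<beta>" "\<beta> < \<gamma>" "p < \<beta>" using pp by (auto simp: \<beta>_def field_simps)
  obtain C where C: "C > 0" "\<And>t. t > 0 \<Longrightarrow> F t \<le> C * t powr (- \<beta>)"
  proof -
    have "\<exists>C>0. \<forall>t>0. F t \<le> C * t powr (- \<beta>)"
    proof (rule tail_bound[OF _ _ L(1) _ b(1,2)])
      show "F t \<le> F s" if "0 < s" "s \<le> t" for s t
        unfolding F_def by (rule finite_measure_mono) (use that in auto)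
      show "F t \<le> 1" for t unfolding F_def by simp
      show "\<forall>t>0. F t = L t * t powr - \<gamma>" using L(2) by (simp add: F_def)
    qed
    then show ?thesis using that by blast
  qed
  have mp: "integrable M (\<lambda>\<omega>. real (D 0 \<omega>) powr p)"
    by (rule moment[of C \<beta> p]) (use C b pp in \<open>auto simp: F_def\<close>)
  define m where "m = expectation (\<lambda>\<omega>. real (D 0 \<omega>) powr p)"
  have kp: "real k \<le> real k powr p" for k :: nat
  proof (cases "k = 0")
    case False
    then have "real k powr 1 \<le> real k powr p" using pp by (intro powr_mono) auto
    then show ?thesis using False by simp
  qed simp
  have intX0: "integrable M (\<lambda>\<omega>. real (D 0 \<omega>))"
    by (rule Bochner_Integration.integrable_bound[OF mp]) (auto intro!: AE_I2 kp)
  have mu0: "\<mu> > 0"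
  proof -
    from L(1) have "\<forall>\<^sub>F t in at_top. L t > 0" unfolding slowly_varying_def by auto
    then obtain T where T: "\<And>t. t \<ge> T \<Longrightarrow> L t > 0" unfolding eventually_at_top_linorder by blast
    define t0 where "t0 = max T 1"
    have t0: "t0 > 0" "L t0 > 0" using T by (auto simp: t0_def)
    have "0 < L t0 * t0 powr (- \<gamma>)" using t0 by simp
    also have "\<dots> = F t0" using L(2) t0 by (simp add: F_def)
    also have "\<dots> \<le> prob {\<omega> \<in> space M. real (D 0 \<omega>) \<ge> t0}"
      unfolding F_def by (rule finite_measure_mono) auto
    also have "\<dots> \<le> \<mu> / t0" unfolding muE by (rule markov[OF intX0]) (use t0 in auto)
    finally show ?thesis using t0 by (simp add: zero_less_divide_iff)
  qed
  define Tn where "Tn = (\<lambda>n \<omega>.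
           real n powr (3 * \<gamma> / 2 - 3 + \<delta>) *
           \<bar>\<Sum>(i, j, k) \<in> {(i, j, k). i < j \<and> j < k \<and> k < n}.
              tri_kernel (\<Sum>l<n. real (D l \<omega>)) \<mu> n \<epsilon>
                  (real (D i \<omega>)) (real (D j \<omega>)) (real (D k \<omega>))
            - tri_kernel (\<mu> * real n) \<mu> n \<epsilon>
                  (real (D i \<omega>)) (real (D j \<omega>)) (real (D k \<omega>))\<bar>)"
  define q where "q = (3 - 3 * \<gamma> / 2 - \<delta> + \<theta>') / 3"
  define Kc where "Kc n \<omega> = real (card {i. i < n \<and> \<epsilon> * sqrt (\<mu> * real n) \<le> real (D i \<omega>)})" for n \<omega>
  define x where "x n = \<mu> * real n powr (1 - \<theta>) / 3" for n :: nat
  define bb where "bb n = real n powr \<alpha>" for n :: nat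
  define a1 where "a1 n = real n * (m / (\<epsilon> * sqrt (\<mu> * real n)) powr p) / real n powr q" for n :: nat
  define a2 where "a2 n = real n * (m * bb n powr (1 - p)) / x n" for n :: nat
  define a3 where "a3 n = real n * (bb n * \<mu>) / (x n)\<^sup>2" for n :: nat
  have lim1: "a1 \<longlonglongrightarrow> 0"
  proof -
    have "((\<lambda>n. (m / (\<epsilon> powr p * \<mu> powr (p / 2))) * real n powr (1 - p / 2 - q)) \<longlonglongrightarrow> 0)"
      by (rule lim_powr0) (use pp in \<open>simp add: q_def field_simps\<close>)
    moreover have "\<forall>\<^sub>F n in sequentially. (m / (\<epsilon> powr p * \<mu> powr (p / 2))) * real n powr (1 - p / 2 - q) = a1 n"
      using eventually_gt_at_top[of 0] unfolding a1_def by eventually_elim (rule eq_a1[symmetric], use mu0 e in auto)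
    ultimately show ?thesis by (rule Lim_transform_eventually)
  qed
  have lim2: "a2 \<longlonglongrightarrow> 0"
  proof -
    have "((\<lambda>n. (3 * m / \<mu>) * real n powr (\<theta> - \<alpha> * (p - 1))) \<longlonglongrightarrow> 0)"
      by (rule lim_powr0) (use pp in simp)
    moreover have "\<forall>\<^sub>F n in sequentially. (3 * m / \<mu>) * real n powr (\<theta> - \<alpha> * (p - 1)) = a2 n"
      using eventually_gt_at_top[of 0] unfolding a2_def bb_def x_def by eventually_elim (rule eq_a2[symmetric], use mu0 in auto)
    ultimately show ?thesis by (rule Lim_transform_eventually)
  qed
  have lim3: "a3 \<longlonglongrightarrow> 0"
  proof -
    have "((\<lambda>n. (9 / \<mu>) * real n powr (\<alpha> - 1 + 2 * \<theta>)) \<longlonglongrightarrow> 0)"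
      by (rule lim_powr0) (use pp in simp)
    moreover have "\<forall>\<^sub>F n in sequentially. (9 / \<mu>) * real n powr (\<alpha> - 1 + 2 * \<theta>) = a3 n"
      using eventually_gt_at_top[of 0] unfolding a3_def bb_def x_def by eventually_elim (rule eq_a3[symmetric], use mu0 in auto)
    ultimately show ?thesis by (rule Lim_transform_eventually)
  qed
  have "conv_prob_zero M Tn"
    unfolding conv_prob_zero_def
  proof (intro allI impI)
    fix e :: real assume e0: "e > 0"
    have ev1: "\<forall>\<^sub>F n in sequentially. real n powr (- \<theta>) \<le> 1 / 2"
    proof -
      have "((\<lambda>n. 1 * real n powr (- \<theta>)) \<longlonglongrightarrow> 0)" by (rule lim_powr0) (use pp in simp)
      from order_tendstoD(2)[OF this, of "1/2"]
      have "\<forall>\<^sub>F n in sequentially. 1 * real n powr (- \<theta>) < 1 / 2" by simp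
      then show ?thesis by (rule eventually_mono) simp
    qed
    have ev2: "\<forall>\<^sub>F n in sequentially. 6 / \<epsilon>\<^sup>2 * real n powr (\<theta>' - \<theta>) < e"
      using order_tendstoD(2)[OF lim_powr0[of "\<theta>' - \<theta>" "6 / \<epsilon>\<^sup>2"] e0] pp by simp
    have ev3: "\<forall>\<^sub>F n in sequentially. a2 n < 1"
      using order_tendstoD(2)[OF lim2, of 1] by simp
    have bnd: "\<forall>\<^sub>F n in sequentially. prob {\<omega> \<in> space M. \<bar>Tn n \<omega>\<bar> > e} \<le> a2 n + a3 n + a1 n"
      using eventually_gt_at_top[of 0] ev1 ev2 ev3
    proof eventually_elim
      case (elim n)
      note n0 = elim(1) and nth = elim(2) and nsmall = elim(3) and na2 = elim(4)
      have nr: "real n > 0" using n0 by simp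
      have N0: "\<mu> * real n > 0" using mu0 nr by simp
      have x0: "x n > 0" using mu0 nr by (simp add: x_def)
      have b0: "bb n > 0" using nr by (simp add: bb_def)
      have x3: "3 * x n = (\<mu> * real n) * real n powr (- \<theta>)"
      proof -
        have "real n powr (1 - \<theta>) = real n * real n powr (- \<theta>)"
          using nr by (simp add: powr_diff powr_minus divide_inverse)
        then show ?thesis by (simp add: x_def)
      qed
      have sub: "{\<omega> \<in> space M. \<bar>Tn n \<omega>\<bar> > e} \<subseteq>
          {\<omega> \<in> space M. \<bar>(\<Sum>l<n. real (D l \<omega>)) - \<mu> * real n\<bar> > 3 * x n} \<union>
          {\<omega> \<in> space M. Kc n \<omega> > real n powr q}"
      proof (rule subsetI, rule ccontr)
        fix \<omega> assume om: "\<omega> \<in> {\<omega> \<in> space M. \<bar>Tn n \<omega>\<bar> > e}"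
          and nin: "\<omega> \<notin> {\<omega> \<in> space M. \<bar>(\<Sum>l<n. real (D l \<omega>)) - \<mu> * real n\<bar> > 3 * x n} \<union>
          {\<omega> \<in> space M. Kc n \<omega> > real n powr q}"
        define S where "S = (\<Sum>l<n. real (D l \<omega>))"
        define N where "N = \<mu> * real n"
        have hS: "\<bar>S - N\<bar> \<le> N * real n powr (- \<theta>)" using om nin x3 by (auto simp: S_def N_def)
        have hK: "Kc n \<omega> \<le> real n powr q" using om nin by auto
        have r: "\<bar>S - N\<bar> / N \<le> real n powr (- \<theta>)" using hS N0 by (simp add: N_def divide_le_eq mult.commute)
        have S2: "2 * S \<ge> N" using hS nth N0 unfolding N_def[symmetric]
        proof -
          have "\<bar>S - N\<bar> \<le> N * (1/2)" using hS nth N0 unfolding N_def by (smt (verit) mult_left_mono)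
          then show ?thesis by linarith
        qed
        have sumb: "\<bar>\<Sum>(i, j, k) \<in> {(i, j, k). i < j \<and> j < k \<and> k < n}.
              tri_kernel S \<mu> n \<epsilon> (real (D i \<omega>)) (real (D j \<omega>)) (real (D k \<omega>))
            - tri_kernel (\<mu> * real n) \<mu> n \<epsilon> (real (D i \<omega>)) (real (D j \<omega>)) (real (D k \<omega>))\<bar>
            \<le> 6 / \<epsilon>\<^sup>2 * (\<bar>S - N\<bar> / N) * (Kc n \<omega>) ^ 3"
          using triple_sum_bound[of \<mu> n "\<lambda>i. real (D i \<omega>)" \<epsilon>] N0 S2 e
          unfolding S_def N_def Kc_def by simp
        have K0: "Kc n \<omega> \<ge> 0" by (simp add: Kc_def)
        have "6 / \<epsilon>\<^sup>2 * (\<bar>S - N\<bar> / N) * (Kc n \<omega>) ^ 3 \<le> 6 / \<epsilon>\<^sup>2 * real n powr (- \<theta>) * (real n powr q) ^ 3"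
          using r hK K0 e N0 unfolding N_def by (intro mult_mono power_mono) auto
        also have "(real n powr q) ^ 3 = real n powr (3 * q)"
          using nr by (simp add: powr_realpow[symmetric] powr_powr mult.commute)
        finally have chain: "6 / \<epsilon>\<^sup>2 * (\<bar>S - N\<bar> / N) * (Kc n \<omega>) ^ 3 \<le> 6 / \<epsilon>\<^sup>2 * real n powr (- \<theta>) * real n powr (3 * q)" .
        define Sig where "Sig = \<bar>\<Sum>(i, j, k) \<in> {(i, j, k). i < j \<and> j < k \<and> k < n}.
              tri_kernel S \<mu> n \<epsilon> (real (D i \<omega>)) (real (D j \<omega>)) (real (D k \<omega>))
            - tri_kernel (\<mu> * real n) \<mu> n \<epsilon> (real (D i \<omega>)) (real (D j \<omega>)) (real (D k \<omega>))\<bar>"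
        have sig: "Sig \<le> 6 / \<epsilon>\<^sup>2 * real n powr (- \<theta>) * real n powr (3 * q)"
          using sumb chain unfolding Sig_def by linarith
        have Tq: "\<bar>Tn n \<omega>\<bar> = real n powr (3 * \<gamma> / 2 - 3 + \<delta>) * Sig"
          unfolding Tn_def Sig_def S_def by (simp add: abs_mult)
        have sumb2: "\<bar>Tn n \<omega>\<bar> \<le> real n powr (3 * \<gamma> / 2 - 3 + \<delta>) * (6 / \<epsilon>\<^sup>2 * real n powr (- \<theta>) * real n powr (3 * q))"
          unfolding Tq by (rule mult_left_mono[OF sig]) simp
        note sumb2
        also have "\<dots> = 6 / \<epsilon>\<^sup>2 * real n powr (\<theta>' - \<theta>)"
        proof -
          have "real n powr (3 * \<gamma> / 2 - 3 + \<delta>) * real n powr (- \<theta>) * real n powr (3 * q)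
                = real n powr (3 * \<gamma> / 2 - 3 + \<delta> + - \<theta> + 3 * q)"
            by (simp only: powr_add[of "real n" "3 * \<gamma> / 2 - 3 + \<delta> + - \<theta>" "3 * q"]
                  powr_add[of "real n" "3 * \<gamma> / 2 - 3 + \<delta>" "- \<theta>"])
          also have "3 * \<gamma> / 2 - 3 + \<delta> + - \<theta> + 3 * q = \<theta>' - \<theta>" by (simp add: q_def field_simps)
          finally show ?thesis by (simp add: algebra_simps)
        qed
        finally show False using nsmall om by simp
      qed
      have "prob {\<omega> \<in> space M. \<bar>Tn n \<omega>\<bar> > e} \<le>
          prob ({\<omega> \<in> space M. \<bar>(\<Sum>l<n. real (D l \<omega>)) - \<mu> * real n\<bar> > 3 * x n} \<union>
          {\<omega> \<in> space M. Kc n \<omega> > real n powr q})"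
        by (rule finite_measure_mono[OF sub]) (auto simp: Kc_def)
      also have "\<dots> \<le> prob {\<omega> \<in> space M. \<bar>(\<Sum>l<n. real (D l \<omega>)) - \<mu> * real n\<bar> > 3 * x n}
          + prob {\<omega> \<in> space M. Kc n \<omega> > real n powr q}"
        by (rule measure_Un_le) (auto simp: Kc_def)
      also have "prob {\<omega> \<in> space M. \<bar>(\<Sum>l<n. real (D l \<omega>)) - \<mu> * real n\<bar> > 3 * x n} \<le> a2 n + a3 n"
      proof -
        have bias: "real n * (m * bb n powr (1 - p)) \<le> x n"
          using na2 x0 by (simp add: a2_def divide_less_eq)
        show ?thesis
          using S_dev[OF mp pp(1) b0 x0 muE bias[unfolded m_def]] unfolding a2_def a3_def m_def by simp
      qed
      also have "prob {\<omega> \<in> space M. Kc n \<omega> > real n powr q} \<le> a1 n"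
        unfolding Kc_def a1_def m_def
        by (rule K_bound[OF mp]) (use pp e mu0 nr in auto)
      finally show ?case by simp
    qed
    show "(\<lambda>n. prob {\<omega> \<in> space M. \<bar>Tn n \<omega>\<bar> > e}) \<longlonglongrightarrow> 0"
    proof (rule tendsto_sandwich[OF _ bnd])
      show "\<forall>\<^sub>F n in sequentially. 0 \<le> prob {\<omega> \<in> space M. \<bar>Tn n \<omega>\<bar> > e}" by simp
      show "(\<lambda>n. 0) \<longlonglongrightarrow> 0" by simp
      show "(\<lambda>n. a2 n + a3 n + a1 n) \<longlonglongrightarrow> 0"
        using tendsto_add[OF tendsto_add[OF lim2 lim3] lim1] by simp
    qed
  qed
  then show ?thesis unfolding Tn_def .
qed

end


lemma Bwin_borel[measurable]: "Bwin \<mu> n \<epsilon> \<in> sets borel"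
  by (simp add: Bwin_def)

lemma tri_meas[measurable]:
  assumes [measurable]: "N \<in> borel_measurable M" "x \<in> borel_measurable M" "y \<in> borel_measurable M" "z \<in> borel_measurable M"
  shows "(\<lambda>\<omega>. tri_kernel (N \<omega>) \<mu> n \<epsilon> (x \<omega>) (y \<omega>) (z \<omega>)) \<in> borel_measurable M"
  unfolding tri_kernel_def by measurable

context iid_setup begin

lemma Sig_meas[measurable]:
  "(\<lambda>\<omega>. \<Sum>(i, j, k) \<in> {(i, j, k). i < j \<and> j < k \<and> k < n}.
              tri_kernel (\<Sum>l<n. real (D l \<omega>)) \<mu> n \<epsilon>
                  (real (D i \<omega>)) (real (D j \<omega>)) (real (D k \<omega>))
            - tri_kernel (\<mu> * real n) \<mu> n \<epsilon>
                  (real (D i \<omega>)) (real (D j \<omega>)) (real (D k \<omega>))) \<in> borel_measurable M"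
proof (rule borel_measurable_sum)
  fix t :: "nat \<times> nat \<times> nat"
  obtain i j k where t: "t = (i, j, k)" by (cases t) auto
  have "(\<lambda>\<omega>. tri_kernel (\<Sum>l<n. real (D l \<omega>)) \<mu> n \<epsilon>
                  (real (D i \<omega>)) (real (D j \<omega>)) (real (D k \<omega>))
            - tri_kernel (\<mu> * real n) \<mu> n \<epsilon>
                  (real (D i \<omega>)) (real (D j \<omega>)) (real (D k \<omega>))) \<in> borel_measurable M"
    by measurable
  then show "(\<lambda>\<omega>. case t of (i, j, k) \<Rightarrow> tri_kernel (\<Sum>l<n. real (D l \<omega>)) \<mu> n \<epsilon>
                  (real (D i \<omega>)) (real (D j \<omega>)) (real (D k \<omega>))
            - tri_kernel (\<mu> * real n) \<mu> n \<epsilon>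
                  (real (D i \<omega>)) (real (D j \<omega>)) (real (D k \<omega>))) \<in> borel_measurable M"
    by (simp add: t)
qed

end

theorem lemma4p4:
  fixes M :: "'a measure" and D :: "nat \<Rightarrow> 'a \<Rightarrow> nat"
    and \<gamma> \<mu> \<kappa> \<epsilon> \<delta> :: real
  assumes "prob_space M"
    and "\<And>i. D i \<in> measurable M (count_space UNIV)"
    and "prob_space.indep_vars M (\<lambda>_. count_space UNIV) D UNIV"
    and "\<And>i. distr M (count_space UNIV) (D i) = distr M (count_space UNIV) (D 0)"
    and "1 < \<gamma>" and "\<gamma> < 2"
    and "\<exists>L. slowly_varying L \<and>
           (\<forall>t>0. measure M {\<omega> \<in> space M. real (D 0 \<omega>) > t} = L t * t powr (- \<gamma>))"
    and "\<mu> = prob_space.expectation M (\<lambda>\<omega>. real (D 0 \<omega>))"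
    and "\<kappa> = (\<gamma> - 1) / (1 + \<gamma>)"
    and "\<epsilon> > 0" and "\<delta> < \<kappa>"
  shows "conv_prob_zero M (\<lambda>n \<omega>.
           real n powr (3 * \<gamma> / 2 - 3 + \<delta>) *
           \<bar>\<Sum>(i, j, k) \<in> {(i, j, k). i < j \<and> j < k \<and> k < n}.
              tri_kernel (\<Sum>l<n. real (D l \<omega>)) \<mu> n \<epsilon>
                  (real (D i \<omega>)) (real (D j \<omega>)) (real (D k \<omega>))
            - tri_kernel (\<mu> * real n) \<mu> n \<epsilon>
                  (real (D i \<omega>)) (real (D j \<omega>)) (real (D k \<omega>))\<bar>)"
proof -
  interpret iid_setup M D
    unfolding iid_setup_def iid_setup_axioms_def using assms(1-4) by auto
  define Sig where "Sig n \<omega> = \<bar>\<Sum>(i, j, k) \<in> {(i, j, k). i < j \<and> j < k \<and> k < n}.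
              tri_kernel (\<Sum>l<n. real (D l \<omega>)) \<mu> n \<epsilon>
                  (real (D i \<omega>)) (real (D j \<omega>)) (real (D k \<omega>))
            - tri_kernel (\<mu> * real n) \<mu> n \<epsilon>
                  (real (D i \<omega>)) (real (D j \<omega>)) (real (D k \<omega>))\<bar>" for n \<omega>
  define \<delta>' where "\<delta>' = max \<delta> (\<kappa> / 2)"
  have k0: "\<kappa> > 0" using assms(5,9) by simp
  have h: "0 < \<kappa> / 2" "\<kappa> / 2 < \<kappa>" using k0 by auto
  have d0: "0 < \<delta>'" "\<delta>' < \<kappa>" "\<delta> \<le> \<delta>'" using h assms(11) unfolding \<delta>'_def by auto
  have d': "0 < \<delta>'" "\<delta>' < (\<gamma> - 1) / (1 + \<gamma>)" "\<delta> \<le> \<delta>'"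
    using d0 assms(9) by auto
  have cp: "conv_prob_zero M (\<lambda>n \<omega>. real n powr (3 * \<gamma> / 2 - 3 + \<delta>') * Sig n \<omega>)"
    unfolding Sig_def by (rule main_pos[OF assms(5,6,7,8,10) d'(1,2)])
  have le: "\<bar>real n powr (3 * \<gamma> / 2 - 3 + \<delta>) * Sig n \<omega>\<bar> \<le> \<bar>real n powr (3 * \<gamma> / 2 - 3 + \<delta>') * Sig n \<omega>\<bar>" for n \<omega>
  proof (cases "n = 0")
    case False
    then have "real n powr (3 * \<gamma> / 2 - 3 + \<delta>) \<le> real n powr (3 * \<gamma> / 2 - 3 + \<delta>')"
      using d'(3) by (intro powr_mono) auto
    then show ?thesis by (simp add: abs_mult Sig_def mult_right_mono)
  qed simp
  have "conv_prob_zero M (\<lambda>n \<omega>. real n powr (3 * \<gamma> / 2 - 3 + \<delta>) * Sig n \<omega>)"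
    unfolding conv_prob_zero_def
  proof (intro allI impI)
    fix e :: real assume e: "e > 0"
    from cp e have lim: "(\<lambda>n. prob {\<omega> \<in> space M. \<bar>real n powr (3 * \<gamma> / 2 - 3 + \<delta>') * Sig n \<omega>\<bar> > e}) \<longlonglongrightarrow> 0"
      unfolding conv_prob_zero_def by blast
    show "(\<lambda>n. prob {\<omega> \<in> space M. \<bar>real n powr (3 * \<gamma> / 2 - 3 + \<delta>) * Sig n \<omega>\<bar> > e}) \<longlonglongrightarrow> 0"
    proof (rule tendsto_sandwich[OF _ _ tendsto_const lim])
      show "\<forall>\<^sub>F n in sequentially. 0 \<le> prob {\<omega> \<in> space M. \<bar>real n powr (3 * \<gamma> / 2 - 3 + \<delta>) * Sig n \<omega>\<bar> > e}"
        by simp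
      show "\<forall>\<^sub>F n in sequentially. prob {\<omega> \<in> space M. \<bar>real n powr (3 * \<gamma> / 2 - 3 + \<delta>) * Sig n \<omega>\<bar> > e}
          \<le> prob {\<omega> \<in> space M. \<bar>real n powr (3 * \<gamma> / 2 - 3 + \<delta>') * Sig n \<omega>\<bar> > e}"
      proof (rule always_eventually, rule allI, rule finite_measure_mono)
        fix n
        show "{\<omega> \<in> space M. \<bar>real n powr (3 * \<gamma> / 2 - 3 + \<delta>) * Sig n \<omega>\<bar> > e}
          \<subseteq> {\<omega> \<in> space M. \<bar>real n powr (3 * \<gamma> / 2 - 3 + \<delta>') * Sig n \<omega>\<bar> > e}"
          using le[of n] by (auto intro: less_le_trans)
        show "{\<omega> \<in> space M. \<bar>real n powr (3 * \<gamma> / 2 - 3 + \<delta>') * Sig n \<omega>\<bar> > e} \<in> sets M"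
          unfolding Sig_def by measurable
      qed
    qed
  qed
  then show ?thesis unfolding Sig_def .
qed


end
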